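(* Let $A_1,\dots,A_n$ be commutative rings with unity and $B=A_1\oplus\cdots\oplus A_n$ their direct product. Let $(a_1,\dots,a_n)\in B$ be a non-zero, non-unit element. If $(a_1,\dots,a_n)$ is F-irreducible in $B$, then there exists $i\in\{1,\dots,n\}$ such that $a_i$ is F-irreducible in $A_i$ and $a_j$ is a unit of $A_j$ for every $j\neq i$.
   Context: For a commutative ring with unity $R$ and $r\in R$: a factorization of $r$ is an expression $r=a_1\cdots a_m$ with $a_k\in R$; a refinement of this factorization is a factorization obtained by replacing one or more of the factors by a factorization of that factor. A non-unit element $r\in R$ is called F-irreducible if every factorization of $r$ has a refinement in which $r$ appears as one of the new factors. *)

theory Defs
  imports "HOL-Algebra.Ring"
begin

definition list_prod :: "('a, 'b) ring_scheme \<Rightarrow> 'a list \<Rightarrow> 'a" where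
  "list_prod R xs = foldr (\<lambda>x y. x \<otimes>\<^bsub>R\<^esub> y) xs \<one>\<^bsub>R\<^esub>"

definition is_factorization :: "('a, 'b) ring_scheme \<Rightarrow> 'a \<Rightarrow> 'a list \<Rightarrow> bool" where
  "is_factorization R r as \<longleftrightarrow> set as \<subseteq> carrier R \<and> list_prod R as = r"

text \<open>A refinement of the factorization as: each factor a_k is replaced by a factorization
  bss!k of a_k (leaving a factor unchanged corresponds to the one-element factorization [a_k]).
  The refined factorization is concat bss.\<close>
definition is_refinement :: "('a, 'b) ring_scheme \<Rightarrow> 'a list \<Rightarrow> 'a list list \<Rightarrow> bool" where
  "is_refinement R as bss \<longleftrightarrow> length bss = length as \<and>
     (\<forall>k < length as. is_factorization R (as ! k) (bss ! k))"

definition F_irreducible :: "('a, 'b) ring_scheme \<Rightarrow> 'a \<Rightarrow> bool" where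
  "F_irreducible R r \<longleftrightarrow> r \<in> carrier R \<and> r \<notin> Units R \<and>
     (\<forall>as. is_factorization R r as \<longrightarrow>
        (\<exists>bss. is_refinement R as bss \<and>
           (\<exists>k < length as. bss ! k \<noteq> [as ! k] \<and> r \<in> set (bss ! k))))"

definition prod_ring :: "(nat \<Rightarrow> 'a ring) \<Rightarrow> nat set \<Rightarrow> (nat \<Rightarrow> 'a) ring" where
  "prod_ring A I = \<lparr>carrier = PiE I (\<lambda>i. carrier (A i)),
     monoid.mult = (\<lambda>x y. \<lambda>i\<in>I. x i \<otimes>\<^bsub>A i\<^esub> y i),
     one = (\<lambda>i\<in>I. \<one>\<^bsub>A i\<^esub>),
     zero = (\<lambda>i\<in>I. \<zero>\<^bsub>A i\<^esub>),
     add = (\<lambda>x y. \<lambda>i\<in>I. x i \<oplus>\<^bsub>A i\<^esub> y i)\<rparr>"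

end

theory Submission
  imports Defs
begin

lemma P_carrier[simp]: "carrier (prod_ring A I) = PiE I (\<lambda>i. carrier (A i))"
  by (simp add: prod_ring_def)
lemma P_mult[simp]: "x \<otimes>\<^bsub>prod_ring A I\<^esub> y = (\<lambda>i\<in>I. x i \<otimes>\<^bsub>A i\<^esub> y i)"
  by (simp add: prod_ring_def)
lemma P_one[simp]: "\<one>\<^bsub>prod_ring A I\<^esub> = (\<lambda>i\<in>I. \<one>\<^bsub>A i\<^esub>)"
  by (simp add: prod_ring_def)

lemma P_comm_monoid:
  assumes "\<And>i. i \<in> I \<Longrightarrow> cring (A i)"
  shows "comm_monoid (prod_ring A I)"
proof -
  have cm: "\<And>i. i \<in> I \<Longrightarrow> comm_monoid (A i)" using assms cring.axioms(2) by blast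
  have m: "\<And>i. i \<in> I \<Longrightarrow> monoid (A i)" using cm comm_monoid.axioms(1) by blast
  show ?thesis
    unfolding comm_monoid_def monoid_def comm_monoid_axioms_def
  proof (intro conjI allI impI ballI)
    fix x y z assume xyz: "x \<in> carrier (prod_ring A I)" "y \<in> carrier (prod_ring A I)" "z \<in> carrier (prod_ring A I)"
    show "x \<otimes>\<^bsub>prod_ring A I\<^esub> y \<otimes>\<^bsub>prod_ring A I\<^esub> z = x \<otimes>\<^bsub>prod_ring A I\<^esub> (y \<otimes>\<^bsub>prod_ring A I\<^esub> z)"
      using xyz m by (auto simp: fun_eq_iff intro!: monoid.m_assoc[OF m] PiE_mem[of _ I])
  qed (use m cm in \<open>auto simp: fun_eq_iff PiE_def extensional_def Pi_iff monoid.m_closed monoid.one_closed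
     intro: monoid.l_one[OF m] monoid.r_one[OF m] comm_monoid.m_comm[OF cm] monoid.m_closed[OF m]\<close>)
qed

lemma list_prod_mem:
  assumes "comm_monoid R" "set xs \<subseteq> carrier R" "x \<in> set xs"
  shows "\<exists>c\<in>carrier R. list_prod R xs = x \<otimes>\<^bsub>R\<^esub> c"
  using assms(2,3)
proof (induction xs)
  case Nil then show ?case by simp
next
  case (Cons y ys)
  interpret comm_monoid R by fact
  have cl: "list_prod R ys \<in> carrier R"
    using Cons.prems(1) by (induction ys) (auto simp: list_prod_def)
  show ?case
  proof (cases "x = y")
    case True
    then show ?thesis using cl by (auto simp: list_prod_def)
  next
    case False
    then have "x \<in> set ys" using Cons by auto
    then obtain c where c: "c \<in> carrier R" "list_prod R ys = x \<otimes>\<^bsub>R\<^esub> c" using Cons by auto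
    have "list_prod R (y # ys) = x \<otimes>\<^bsub>R\<^esub> (y \<otimes>\<^bsub>R\<^esub> c)"
      using c Cons.prems \<open>x \<in> set ys\<close> by (auto simp: list_prod_def m_lcomm)
    then show ?thesis using c Cons.prems by auto
  qed
qed

lemma Firr_div:
  assumes "comm_monoid R" "F_irreducible R r" "is_factorization R r as"
  shows "\<exists>k<length as. \<exists>c\<in>carrier R. as ! k = r \<otimes>\<^bsub>R\<^esub> c"
proof -
  obtain bss k where b: "is_refinement R as bss" "k < length as" "r \<in> set (bss ! k)"
    using assms(2,3) unfolding F_irreducible_def by blast
  then have f: "is_factorization R (as ! k) (bss ! k)" by (auto simp: is_refinement_def)
  then show ?thesis using list_prod_mem[OF assms(1), of "bss ! k" r] b
    by (auto simp: is_factorization_def)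
qed

lemma Firr_intro:
  assumes "cring R" "r \<in> carrier R" "r \<notin> Units R"
    and H: "\<And>as. is_factorization R r as \<Longrightarrow> \<exists>k<length as. \<exists>c\<in>carrier R. as ! k = r \<otimes>\<^bsub>R\<^esub> c"
  shows "F_irreducible R r"
  unfolding F_irreducible_def
proof (intro conjI assms allI impI)
  interpret cring R by fact
  fix as assume fa: "is_factorization R r as"
  then obtain k c where kc: "k < length as" "c \<in> carrier R" "as ! k = r \<otimes>\<^bsub>R\<^esub> c" using H by blast
  have sa: "set as \<subseteq> carrier R" using fa by (simp add: is_factorization_def)
  define bss where "bss = map (\<lambda>j. if j = k then [r, c] else [as ! j]) [0..<length as]"
  have "is_refinement R as bss"
    unfolding is_refinement_def bss_def is_factorization_def list_prod_def
    using kc sa assms(2) by (auto simp: nth_mem subsetD)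
  moreover have "bss ! k \<noteq> [as ! k] \<and> r \<in> set (bss ! k)"
    using kc by (simp add: bss_def)
  ultimately show "\<exists>bss. is_refinement R as bss \<and>
           (\<exists>k<length as. bss ! k \<noteq> [as ! k] \<and> r \<in> set (bss ! k))" using kc by blast
qed

lemma unit_of:
  assumes "cring R" "a \<in> carrier R" "c \<in> carrier R" "\<one>\<^bsub>R\<^esub> = a \<otimes>\<^bsub>R\<^esub> c"
  shows "a \<in> Units R"
proof -
  interpret cring R by fact
  have "c \<otimes>\<^bsub>R\<^esub> a = \<one>\<^bsub>R\<^esub>" using assms by (simp add: m_comm)
  then show ?thesis using assms unfolding Units_def by auto
qed

theorem mainTheorem6:
  fixes A :: "nat \<Rightarrow> 'a ring" and n :: nat and a :: "nat \<Rightarrow> 'a"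
  assumes "\<And>i. i \<in> {1..n} \<Longrightarrow> cring (A i)"
    and "a \<in> carrier (prod_ring A {1..n})"
    and "a \<noteq> \<zero>\<^bsub>prod_ring A {1..n}\<^esub>"
    and "a \<notin> Units (prod_ring A {1..n})"
    and "F_irreducible (prod_ring A {1..n}) a"
  shows "\<exists>i\<in>{1..n}. F_irreducible (A i) (a i) \<and>
           (\<forall>j\<in>{1..n}. j \<noteq> i \<longrightarrow> a j \<in> Units (A j))"
proof -
  define I where "I = {1..n::nat}"
  define P where "P = prod_ring A I"
  have cr: "\<And>i. i \<in> I \<Longrightarrow> cring (A i)" using assms(1) I_def by blast
  have cmP: "comm_monoid P" unfolding P_def using P_comm_monoid cr by blast
  have aC: "a \<in> PiE I (\<lambda>i. carrier (A i))" using assms(2) I_def by simp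
  have aU: "a \<notin> Units P" using assms(4) P_def I_def by simp
  have aF: "F_irreducible P a" using assms(5) P_def I_def by simp
  have ai: "\<And>i. i \<in> I \<Longrightarrow> a i \<in> carrier (A i)" using aC by auto
  have uof: "\<And>i c. i \<in> I \<Longrightarrow> c \<in> PiE I (\<lambda>i. carrier (A i)) \<Longrightarrow>
      \<one>\<^bsub>A i\<^esub> = a i \<otimes>\<^bsub>A i\<^esub> c i \<Longrightarrow> a i \<in> Units (A i)"
    using unit_of cr ai by (metis PiE_mem)
  obtain i where i: "i \<in> I" "a i \<notin> Units (A i)"
  proof (rule ccontr)
    assume "\<not> thesis"
    then have allU: "\<forall>i\<in>I. a i \<in> Units (A i)" using that by blast
    define b where "b = (\<lambda>i\<in>I. inv\<^bsub>A i\<^esub> (a i))"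
    have bC: "b \<in> PiE I (\<lambda>i. carrier (A i))"
      using allU cr by (auto simp: b_def cring_def ring_def monoid.Units_inv_closed)
    have "b \<otimes>\<^bsub>P\<^esub> a = \<one>\<^bsub>P\<^esub>" "a \<otimes>\<^bsub>P\<^esub> b = \<one>\<^bsub>P\<^esub>"
      using allU cr by (auto simp: P_def b_def fun_eq_iff cring_def ring_def
          monoid.Units_l_inv monoid.Units_r_inv)
    then have "a \<in> Units P" using aC bC unfolding Units_def P_def by auto
    then show False using aU by simp
  qed
  have other: "a j \<in> Units (A j)" if j: "j \<in> I" "j \<noteq> i" for j
  proof (rule ccontr)
    assume nj: "a j \<notin> Units (A j)"
    define x where "x = a(i := \<one>\<^bsub>A i\<^esub>)"
    define y where "y = (\<lambda>k\<in>I. \<one>\<^bsub>A k\<^esub>)(i := a i)"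
    have one: "\<And>k. k \<in> I \<Longrightarrow> \<one>\<^bsub>A k\<^esub> \<in> carrier (A k)"
      using cr by (simp add: cring_def ring_def monoid.one_closed)
    have xC: "x \<in> PiE I (\<lambda>i. carrier (A i))" using aC i one by (auto simp: x_def PiE_def extensional_def)
    have yC: "y \<in> PiE I (\<lambda>i. carrier (A i))" using aC i one by (auto simp: y_def PiE_def extensional_def)
    have "x \<otimes>\<^bsub>P\<^esub> (y \<otimes>\<^bsub>P\<^esub> \<one>\<^bsub>P\<^esub>) = a"
    proof -
      have "\<And>k. k \<in> I \<Longrightarrow> x k \<otimes>\<^bsub>A k\<^esub> (y k \<otimes>\<^bsub>A k\<^esub> \<one>\<^bsub>A k\<^esub>) = a k"
        using cr ai by (auto simp: x_def y_def cring_def ring_def monoid.l_one monoid.r_one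
            monoid.one_closed)
      then show ?thesis using aC by (auto simp: P_def fun_eq_iff PiE_def extensional_def)
    qed
    then have "is_factorization P a [x, y]"
      using xC yC by (simp add: is_factorization_def list_prod_def P_def)
    from Firr_div[OF cmP aF this] obtain k c where kc: "k < length [x,y]" "c \<in> carrier P" "[x,y] ! k = a \<otimes>\<^bsub>P\<^esub> c"
      by auto
    have cC: "c \<in> PiE I (\<lambda>i. carrier (A i))" using kc P_def by simp
    show False
    proof (cases k)
      case 0
      then have "x i = (a \<otimes>\<^bsub>P\<^esub> c) i" using kc by simp
      then have "\<one>\<^bsub>A i\<^esub> = a i \<otimes>\<^bsub>A i\<^esub> c i" using i by (simp add: x_def P_def)
      then show False using uof[OF i(1) cC] i by blast
    next
      case (Suc m)
      then have "y j = (a \<otimes>\<^bsub>P\<^esub> c) j" using kc by simp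
      then have "\<one>\<^bsub>A j\<^esub> = a j \<otimes>\<^bsub>A j\<^esub> c j" using j by (simp add: y_def P_def)
      then show False using uof[OF j(1) cC] nj by blast
    qed
  qed
  have "F_irreducible (A i) (a i)"
  proof (rule Firr_intro[OF cr[OF i(1)] ai[OF i(1)] i(2)])
    interpret R: cring "A i" using cr i by blast
    fix as assume fa: "is_factorization (A i) (a i) as"
    have one: "\<And>k. k \<in> I \<Longrightarrow> \<one>\<^bsub>A k\<^esub> \<in> carrier (A k)"
      using cr by (simp add: cring_def ring_def monoid.one_closed)
    define lift where "lift = (\<lambda>c. ((\<lambda>k\<in>I. \<one>\<^bsub>A k\<^esub>)(i := c)))"
    define u where "u = a(i := \<one>\<^bsub>A i\<^esub>)"
    have sa: "set as \<subseteq> carrier (A i)" using fa by (simp add: is_factorization_def)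
    have liftC: "\<And>c. c \<in> carrier (A i) \<Longrightarrow> lift c \<in> PiE I (\<lambda>i. carrier (A i))"
      using i one by (auto simp: lift_def PiE_def extensional_def)
    have uC: "u \<in> PiE I (\<lambda>i. carrier (A i))" using aC i one by (auto simp: u_def PiE_def extensional_def)
    have lp: "set bs \<subseteq> carrier (A i) \<Longrightarrow> list_prod P (map lift bs) = lift (list_prod (A i) bs)" for bs
    proof (induction bs)
      case Nil then show ?case using i by (auto simp: list_prod_def P_def lift_def fun_eq_iff)
    next
      case (Cons b bs)
      have "list_prod (A i) bs \<in> carrier (A i)" using Cons.prems
        by (induction bs) (auto simp: list_prod_def)
      then show ?case using Cons cr i
        by (auto simp: list_prod_def P_def lift_def fun_eq_iff cring_def ring_def monoid.l_one)
    qed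
    have "list_prod P (u # map lift as) = a"
    proof -
      have "list_prod P (u # map lift as) = u \<otimes>\<^bsub>P\<^esub> lift (a i)"
        using lp[OF sa] fa by (simp add: list_prod_def is_factorization_def)
      also have "\<dots> = a"
        using aC cr i ai by (auto simp: P_def u_def lift_def fun_eq_iff PiE_def extensional_def
            cring_def ring_def monoid.l_one monoid.r_one)
      finally show ?thesis .
    qed
    then have "is_factorization P a (u # map lift as)"
      using uC liftC sa by (auto simp: is_factorization_def P_def)
    from Firr_div[OF cmP aF this] obtain k c where
      kc: "k < Suc (length as)" "c \<in> carrier P" "(u # map lift as) ! k = a \<otimes>\<^bsub>P\<^esub> c"
      by auto
    have cC: "c \<in> PiE I (\<lambda>i. carrier (A i))" using kc P_def by simp
    show "\<exists>k<length as. \<exists>c\<in>carrier (A i). as ! k = a i \<otimes>\<^bsub>A i\<^esub> c"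
    proof (cases k)
      case 0
      then have "u i = (a \<otimes>\<^bsub>P\<^esub> c) i" using kc by simp
      then have "\<one>\<^bsub>A i\<^esub> = a i \<otimes>\<^bsub>A i\<^esub> c i" using i by (simp add: u_def P_def)
      then show ?thesis using uof[OF i(1) cC] i by blast
    next
      case (Suc m)
      then have m: "m < length as" using kc by simp
      then have "lift (as ! m) i = (a \<otimes>\<^bsub>P\<^esub> c) i" using kc Suc by simp
      then have "as ! m = a i \<otimes>\<^bsub>A i\<^esub> c i" using i by (simp add: lift_def P_def)
      moreover have "c i \<in> carrier (A i)" using cC i by auto
      ultimately show ?thesis using m by blast
    qed
  qed
  then show ?thesis using i other I_def by blast
qed

end
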